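(* Let $\mathbb{F}$ be any field, let $M\ge N\ge1$ be integers and $c_0,\dots,c_{N-1}\in\mathbb{F}^\times$. Define $p_t(z):=t(c_0+c_1z+\cdots+c_{N-1}z^{N-1})-z^M$. Then for all $\mathbf{u},\mathbf{v}\in\mathbb{F}^N$, $$\det p_t[\mathbf{u}\mathbf{v}^T]=t^{N-1}\Delta_N(\mathbf{u})\Delta_N(\mathbf{v})\prod_{j=0}^{N-1}c_j\Bigl(t-\sum_{j=0}^{N-1}\frac{s_{\mu(M,N,j)}(\mathbf{u})\,s_{\mu(M,N,j)}(\mathbf{v})}{c_j}\Bigr)$$ (an identity of polynomials in $t$). Moreover $s_{\mu(M,N,j)}(1,\dots,1)=\binom{M}{j}\binom{M-j-1}{N-j-1}$ for all $0\le j<N$.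
   Context: $\Delta_N(x_1,\dots,x_N):=\prod_{1\le i<j\le N}(x_i-x_j)$. For a partition $\mathbf{n}=(n_N\ge\cdots\ge n_1\ge0)$, $s_{\mathbf{n}}(x_1,\dots,x_N)$ is the Schur polynomial, i.e. the polynomial (with integer coefficients) equal to $\det(x_i^{n_j+N-j})/\det(x_i^{N-j})$ for pairwise distinct $x_i$. For $0\le j<N$, $\mu(M,N,j)$ is the hook partition $(M-N+1,1,\dots,1,0,\dots,0)$ with $N-j-1$ ones and $j$ zeros. $p_t[\mathbf{u}\mathbf{v}^T]$ is the $N\times N$ matrix with $(i,k)$ entry $p_t(u_iv_k)$. *)

theory Defs
  imports "Jordan_Normal_Form.Determinant" "HOL-Computational_Algebra.Polynomial"
begin

text \<open>Integer polynomials in the variables x_0,...,x_(N-1), represented by their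
 coefficient function on exponent vectors (finite support, exponents only on
 variables below N).\<close>

definition is_mpoly :: "nat \<Rightarrow> ((nat \<Rightarrow> nat) \<Rightarrow> int) \<Rightarrow> bool" where
  "is_mpoly N P \<longleftrightarrow> finite {m. P m \<noteq> 0} \<and> (\<forall>m. P m \<noteq> 0 \<longrightarrow> (\<forall>i\<ge>N. m i = 0))"

definition mpoly_eval :: "nat \<Rightarrow> ((nat \<Rightarrow> nat) \<Rightarrow> int) \<Rightarrow> (nat \<Rightarrow> 'a::comm_ring_1) \<Rightarrow> 'a" where
  "mpoly_eval N P x = (\<Sum>m\<in>{m. P m \<noteq> 0}. of_int (P m) * (\<Prod>i<N. x i ^ m i))"

definition vandermonde :: "nat \<Rightarrow> (nat \<Rightarrow> 'a::comm_ring_1) \<Rightarrow> 'a" where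
  "vandermonde N x = (\<Prod>j<N. \<Prod>i<j. x i - x j)"

text \<open>Partition lam given in weakly decreasing order lam 0 \<ge> lam 1 \<ge> ... \<ge> lam (N-1).
 Alternant det(x_i^(lam_k + N-1-k)).\<close>
definition alternant :: "nat \<Rightarrow> (nat \<Rightarrow> nat) \<Rightarrow> (nat \<Rightarrow> 'a::comm_ring_1) \<Rightarrow> 'a" where
  "alternant N lam x = det (mat N N (\<lambda>(i,k). x i ^ (lam k + (N - 1 - k))))"

definition schur_mpoly :: "nat \<Rightarrow> (nat \<Rightarrow> nat) \<Rightarrow> ((nat \<Rightarrow> nat) \<Rightarrow> int)" where
  "schur_mpoly N lam = (THE P. is_mpoly N P \<and>
     (\<forall>x :: nat \<Rightarrow> rat. inj_on x {..<N} \<longrightarrow>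
        mpoly_eval N P x * alternant N (\<lambda>_. 0) x = alternant N lam x))"

definition schur :: "nat \<Rightarrow> (nat \<Rightarrow> nat) \<Rightarrow> (nat \<Rightarrow> 'a::comm_ring_1) \<Rightarrow> 'a" where
  "schur N lam x = mpoly_eval N (schur_mpoly N lam) x"

definition hook :: "nat \<Rightarrow> nat \<Rightarrow> nat \<Rightarrow> (nat \<Rightarrow> nat)" where
  "hook M N j = (\<lambda>k. if k = 0 then M - N + 1 else if k < N - j then 1 else 0)"

definition pt :: "nat \<Rightarrow> nat \<Rightarrow> (nat \<Rightarrow> 'a::comm_ring_1) \<Rightarrow> 'a \<Rightarrow> 'a poly" where
  "pt M N c z = [: - (z ^ M), (\<Sum>j<N. c j * z ^ j) :]"

end

theory Submission
  imports Defs
begin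

type_synonym mp = "(nat \<Rightarrow> nat) \<Rightarrow> int"

definition madd :: "(nat \<Rightarrow> nat) \<Rightarrow> (nat \<Rightarrow> nat) \<Rightarrow> (nat \<Rightarrow> nat)" where
  "madd a b = (\<lambda>i. a i + b i)"

definition mp_const :: "int \<Rightarrow> mp" where
  "mp_const c = (\<lambda>m. if m = (\<lambda>_. 0) then c else 0)"
definition mp_var :: "nat \<Rightarrow> mp" where
  "mp_var i = (\<lambda>m. if m = (\<lambda>j. if j = i then 1 else 0) then 1 else 0)"
definition mp_add :: "mp \<Rightarrow> mp \<Rightarrow> mp" where
  "mp_add P Q = (\<lambda>m. P m + Q m)"
definition mp_neg :: "mp \<Rightarrow> mp" where
  "mp_neg P = (\<lambda>m. - P m)"
definition mp_mult :: "mp \<Rightarrow> mp \<Rightarrow> mp" where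
  "mp_mult P Q = (\<lambda>m. \<Sum>ab\<in>{ab. P (fst ab) \<noteq> 0 \<and> Q (snd ab) \<noteq> 0 \<and> madd (fst ab) (snd ab) = m}.
       P (fst ab) * Q (snd ab))"

definition mon :: "nat \<Rightarrow> (nat \<Rightarrow> nat) \<Rightarrow> (nat \<Rightarrow> 'a::comm_ring_1) \<Rightarrow> 'a" where
  "mon N m x = (\<Prod>i<N. x i ^ m i)"

lemma mon_add: "mon N (madd a b) x = mon N a x * mon N b x"
  unfolding mon_def madd_def by (simp add: power_add prod.distrib)

lemma mpoly_eval_superset:
  assumes "finite S" "{m. P m \<noteq> 0} \<subseteq> S"
  shows "mpoly_eval N P x = (\<Sum>m\<in>S. of_int (P m) * mon N m x)"
  unfolding mpoly_eval_def mon_def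
  by (rule sum.mono_neutral_left, use assms in auto)

lemma is_mpoly_const: "is_mpoly N (mp_const c)"
  unfolding is_mpoly_def mp_const_def
  by (auto intro: finite_subset[of _ "{\<lambda>_. 0}"])

lemma mpe_const: "mpoly_eval N (mp_const c) x = of_int c"
proof -
  have "mpoly_eval N (mp_const c) x = (\<Sum>m\<in>{\<lambda>_. 0}. of_int (mp_const c m) * mon N m x)"
    by (rule mpoly_eval_superset) (auto simp: mp_const_def split: if_splits)
  thus ?thesis by (simp add: mp_const_def mon_def)
qed

lemma is_mpoly_var: "i < N \<Longrightarrow> is_mpoly N (mp_var i)"
  unfolding is_mpoly_def mp_var_def
  by (auto intro: finite_subset[of _ "{\<lambda>j. if j = i then 1 else 0}"])

lemma mpe_var: assumes "i < N" shows "mpoly_eval N (mp_var i) x = x i"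
proof -
  have "mpoly_eval N (mp_var i) x = (\<Sum>m\<in>{\<lambda>j. if j = i then 1 else 0}. of_int (mp_var i m) * mon N m x)"
    by (rule mpoly_eval_superset) (auto simp: mp_var_def split: if_splits)
  also have "\<dots> = (\<Prod>j<N. x j ^ (if j = i then 1 else 0))" by (simp add: mp_var_def mon_def)
  also have "\<dots> = (\<Prod>j<N. if j = i then x j else 1)" by (rule prod.cong) auto
  also have "\<dots> = x i" using assms by (simp add: prod.delta)
  finally show ?thesis .
qed

lemma is_mpoly_add: "is_mpoly N P \<Longrightarrow> is_mpoly N Q \<Longrightarrow> is_mpoly N (mp_add P Q)"
  unfolding is_mpoly_def mp_add_def
  apply (intro conjI)
   apply (rule finite_subset[of _ "{m. P m \<noteq> 0} \<union> {m. Q m \<noteq> 0}"]; force)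
  by (metis add.right_neutral add_0)

lemma mpe_add: assumes "is_mpoly N P" "is_mpoly N Q"
  shows "mpoly_eval N (mp_add P Q) x = mpoly_eval N P x + mpoly_eval N Q x"
proof -
  let ?S = "{m. P m \<noteq> 0} \<union> {m. Q m \<noteq> 0}"
  have f: "finite ?S" using assms unfolding is_mpoly_def by auto
  have "mpoly_eval N (mp_add P Q) x = (\<Sum>m\<in>?S. of_int (mp_add P Q m) * mon N m x)"
    by (rule mpoly_eval_superset[OF f]) (auto simp: mp_add_def)
  also have "\<dots> = (\<Sum>m\<in>?S. of_int (P m) * mon N m x) + (\<Sum>m\<in>?S. of_int (Q m) * mon N m x)"
    by (simp add: mp_add_def sum.distrib distrib_right)
  also have "\<dots> = mpoly_eval N P x + mpoly_eval N Q x"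
    by (simp add: mpoly_eval_superset[OF f])
  finally show ?thesis .
qed

lemma is_mpoly_neg: "is_mpoly N P \<Longrightarrow> is_mpoly N (mp_neg P)"
  unfolding is_mpoly_def mp_neg_def by auto

lemma mpe_neg: assumes "is_mpoly N P"
  shows "mpoly_eval N (mp_neg P) x = - mpoly_eval N P x"
proof -
  let ?S = "{m. P m \<noteq> 0}"
  have f: "finite ?S" using assms unfolding is_mpoly_def by auto
  have "mpoly_eval N (mp_neg P) x = (\<Sum>m\<in>?S. of_int (mp_neg P m) * mon N m x)"
    by (rule mpoly_eval_superset[OF f]) (auto simp: mp_neg_def)
  thus ?thesis by (simp add: mp_neg_def sum_negf mpoly_eval_superset[OF f])
qed

lemma mult_supp:
  assumes "mp_mult P Q m \<noteq> 0"
  shows "m \<in> (\<lambda>ab. madd (fst ab) (snd ab)) ` ({m. P m \<noteq> 0} \<times> {m. Q m \<noteq> 0})"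
proof -
  from assms have "{ab. P (fst ab) \<noteq> 0 \<and> Q (snd ab) \<noteq> 0 \<and> madd (fst ab) (snd ab) = m} \<noteq> {}"
    unfolding mp_mult_def by (metis (no_types, lifting) sum.empty)
  then obtain a b where "P a \<noteq> 0" "Q b \<noteq> 0" "madd a b = m" by auto
  thus ?thesis by force
qed

lemma is_mpoly_mult: assumes "is_mpoly N P" "is_mpoly N Q" shows "is_mpoly N (mp_mult P Q)"
proof -
  let ?S = "(\<lambda>ab. madd (fst ab) (snd ab)) ` ({m. P m \<noteq> 0} \<times> {m. Q m \<noteq> 0})"
  have "finite ?S" using assms unfolding is_mpoly_def by auto
  moreover have "{m. mp_mult P Q m \<noteq> 0} \<subseteq> ?S" using mult_supp by blast
  moreover have "\<forall>i\<ge>N. m i = 0" if "m \<in> ?S" for m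
    using that assms unfolding is_mpoly_def by (auto simp: madd_def)
  ultimately show ?thesis unfolding is_mpoly_def
    by (metis (mono_tags, lifting) finite_subset mem_Collect_eq subsetD)
qed

lemma mpe_mult: assumes "is_mpoly N P" "is_mpoly N Q"
  shows "mpoly_eval N (mp_mult P Q) x = mpoly_eval N P x * mpoly_eval N Q x"
proof -
  let ?A = "{m. P m \<noteq> 0}" and ?B = "{m. Q m \<noteq> 0}"
  let ?g = "\<lambda>ab::(nat\<Rightarrow>nat)\<times>(nat\<Rightarrow>nat). madd (fst ab) (snd ab)"
  let ?S = "?g ` (?A \<times> ?B)"
  have fA: "finite ?A" and fB: "finite ?B" using assms unfolding is_mpoly_def by auto
  hence fAB: "finite (?A \<times> ?B)" by auto
  hence f: "finite ?S" by auto
  have "mpoly_eval N (mp_mult P Q) x = (\<Sum>m\<in>?S. of_int (mp_mult P Q m) * mon N m x)"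
    by (rule mpoly_eval_superset[OF f]) (use mult_supp in blast)
  also have "\<dots> = (\<Sum>m\<in>?S. \<Sum>ab\<in>{ab \<in> ?A \<times> ?B. ?g ab = m}. of_int (P (fst ab)) * of_int (Q (snd ab)) * mon N (?g ab) x)"
  proof (rule sum.cong[OF refl])
    fix m
    have e: "{ab. P (fst ab) \<noteq> 0 \<and> Q (snd ab) \<noteq> 0 \<and> madd (fst ab) (snd ab) = m} = {ab \<in> ?A \<times> ?B. ?g ab = m}"
      by auto
    show "of_int (mp_mult P Q m) * mon N m x = (\<Sum>ab\<in>{ab \<in> ?A \<times> ?B. ?g ab = m}. of_int (P (fst ab)) * of_int (Q (snd ab)) * mon N (?g ab) x)"
      unfolding mp_mult_def e of_int_sum sum_distrib_right by (rule sum.cong) auto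
  qed
  also have "\<dots> = (\<Sum>ab\<in>?A \<times> ?B. of_int (P (fst ab)) * of_int (Q (snd ab)) * mon N (?g ab) x)"
    by (rule sum.group[OF fAB f]) auto
  also have "\<dots> = (\<Sum>a\<in>?A. \<Sum>b\<in>?B. (of_int (P a) * mon N a x) * (of_int (Q b) * mon N b x))"
    unfolding sum.cartesian_product by (rule sum.cong) (auto simp: mon_add algebra_simps)
  also have "\<dots> = mpoly_eval N P x * mpoly_eval N Q x"
    unfolding mpoly_eval_def mon_def sum_product by simp
  finally show ?thesis .
qed



fun mpE :: "nat \<Rightarrow> nat \<Rightarrow> mp" where
  "mpE 0 k = mp_const (if k = 0 then 1 else 0)"
| "mpE (Suc n) k = mp_add (if k = 0 then mp_const 0 else mpE n (k - 1))
      (mp_neg (mp_mult (mp_var n) (mpE n k)))"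

lemma is_mpoly_mpE: "n \<le> N \<Longrightarrow> is_mpoly N (mpE n k)"
  by (induction n arbitrary: k)
    (auto intro!: is_mpoly_add is_mpoly_neg is_mpoly_mult is_mpoly_var is_mpoly_const)

lemma eval_mpE_Suc: "Suc n \<le> N \<Longrightarrow> mpoly_eval N (mpE (Suc n) k) x =
   (if k = 0 then 0 else mpoly_eval N (mpE n (k - 1)) x) - x n * mpoly_eval N (mpE n k) x"
  by (cases k) (auto simp: mpe_add mpe_neg mpe_mult mpe_const mpe_var
     is_mpoly_mpE is_mpoly_const is_mpoly_var is_mpoly_mult is_mpoly_neg)

lemma eval_mpE_0: "mpoly_eval N (mpE 0 k) x = (if k = 0 then 1 else 0)"
  by (simp add: mpe_const)

lemma linear_mult_coeff: "coeff (p * [:- a, 1:]) k =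
   (if k = 0 then 0 else coeff p (k - 1)) - a * coeff (p :: 'a::comm_ring_1 poly) k"
proof -
  have "p * [:- a, 1:] = smult (- a) p + pCons 0 p"
    by (subst mult.commute) (simp add: mult_pCons_left)
  thus ?thesis by (cases k) auto
qed

lemma coeff_E: "n \<le> N \<Longrightarrow> coeff (\<Prod>l<n. [:- x l, 1:]) k = mpoly_eval N (mpE n k) x"
proof (induction n arbitrary: k)
  case 0 thus ?case by (simp add: mpe_const coeff_1)
next
  case (Suc n)
  have "coeff (\<Prod>l<Suc n. [:- x l, 1:]) k = coeff ((\<Prod>l<n. [:- x l, 1:]) * [:- x n, 1:]) k"
    by simp
  also have "\<dots> = mpoly_eval N (mpE (Suc n) k) x"
    unfolding linear_mult_coeff eval_mpE_Suc[OF Suc.prems] using Suc by (auto simp del: mpE.simps)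
  finally show ?case .
qed

lemma E_top: "n \<le> N \<Longrightarrow> mpoly_eval N (mpE n n) x = 1 \<and> (\<forall>k>n. mpoly_eval N (mpE n k) x = 0)"
proof (induction n)
  case 0 thus ?case by (simp add: mpe_const)
next
  case (Suc n)
  hence IH: "mpoly_eval N (mpE n n) x = 1" "\<And>k. k > n \<Longrightarrow> mpoly_eval N (mpE n k) x = 0" by auto
  show ?case using IH by (auto simp: eval_mpE_Suc[OF Suc.prems] simp del: mpE.simps)
qed

fun mpQ :: "nat \<Rightarrow> nat \<Rightarrow> nat \<Rightarrow> mp" where
  "mpQ N 0 k = mp_const (if k = 0 then 1 else 0)"
| "mpQ N (Suc m) k = mp_add (if k = 0 then mp_const 0 else mpQ N m (k - 1))
      (mp_neg (mp_mult (mpQ N m (N - 1)) (mpE N k)))"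

lemma is_mpoly_mpQ: "is_mpoly N (mpQ N m k)"
  by (induction m arbitrary: k)
    (auto intro!: is_mpoly_add is_mpoly_neg is_mpoly_mult is_mpoly_mpE is_mpoly_const)

lemma eval_mpQ_Suc: "mpoly_eval N (mpQ N (Suc m) k) x =
   (if k = 0 then 0 else mpoly_eval N (mpQ N m (k - 1)) x)
     - mpoly_eval N (mpQ N m (N - 1)) x * mpoly_eval N (mpE N k) x"
  by (cases k) (auto simp: mpe_add mpe_neg mpe_mult mpe_const
     is_mpoly_mpE is_mpoly_const is_mpoly_mpQ is_mpoly_mult is_mpoly_neg)

definition rpoly :: "nat \<Rightarrow> nat \<Rightarrow> (nat \<Rightarrow> 'a::comm_ring_1) \<Rightarrow> 'a poly" where
  "rpoly N m x = (\<Sum>k<N. monom (mpoly_eval N (mpQ N m k) x) k)"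

lemma coeff_sum_monom: "coeff (\<Sum>k<N. monom (a k) k) j = (if j < N then a j else 0)"
  by (simp add: coeff_sum)

lemma Q_dvd:
  assumes N: "1 \<le> N"
  shows "(\<Prod>l<N. [:- x l, 1:]) dvd (monom 1 m - rpoly N m x)"
proof (induction m)
  case 0
  have "monom 1 0 - rpoly N 0 x = 0"
    by (rule poly_eqI) (use N in \<open>auto simp: rpoly_def coeff_sum_monom mpe_const coeff_monom\<close>)
  thus ?case by simp
next
  case (Suc m)
  define e where "e = (\<Prod>l<N. [:- x l, 1:])"
  let ?e = e
  have ce: "coeff e k = mpoly_eval N (mpE N k) x" for k unfolding e_def using coeff_E[of N N x k] by simp
  let ?q = "\<lambda>k. mpoly_eval N (mpQ N m k) x"
  have 1: "monom 1 (Suc m) - rpoly N (Suc m) x =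
     [:0,1:] * (monom 1 m - rpoly N m x) + ([:0,1:] * rpoly N m x - rpoly N (Suc m) x)"
    by (simp add: algebra_simps monom_Suc)
  have 2: "[:0,1:] * rpoly N m x - rpoly N (Suc m) x = smult (?q (N - 1)) ?e"
  proof (rule poly_eqI)
    fix j
    have pc: "[:0,1:] * p = pCons 0 p" for p :: "'a poly" by (simp add: mult_pCons_left)
    have et: "coeff ?e N = 1" "\<And>k. k > N \<Longrightarrow> coeff ?e k = 0"
      using E_top[of N N x] ce by auto
    show "coeff ([:0,1:] * rpoly N m x - rpoly N (Suc m) x) j = coeff (smult (?q (N - 1)) ?e) j"
    proof (cases j)
      case 0 thus ?thesis
        by (simp add: pc rpoly_def coeff_sum_monom eval_mpQ_Suc N ce del: mpQ.simps) (use N in linarith)?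
    next
      case (Suc j')
      consider "Suc j' < N" | "Suc j' = N" | "Suc j' > N" by linarith
      thus ?thesis
      proof cases
        case 1 thus ?thesis using Suc
          by (simp add: pc rpoly_def coeff_sum_monom eval_mpQ_Suc N ce del: mpQ.simps) (use N in linarith)?
      next
        case 2
        have a: "coeff ([:0,1:] * rpoly N m x) j = ?q j'"
          unfolding pc Suc coeff_pCons_Suc using 2 by (simp add: rpoly_def coeff_sum_monom)
        have b: "coeff (rpoly N (Suc m) x) j = 0" using 2 Suc by (simp add: rpoly_def coeff_sum_monom)
        have c: "coeff (smult (?q (N - 1)) ?e) j = ?q (N - 1)" using et 2 Suc by simp
        have "j' = N - 1" using 2 by simp
        thus ?thesis unfolding coeff_diff a b c by simp
      next
        case 3 thus ?thesis using Suc et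
          by (simp add: pc rpoly_def coeff_sum_monom eval_mpQ_Suc N del: mpQ.simps)
      qed
    qed
  qed
  show ?case unfolding 1 2 e_def
    by (rule dvd_add[OF dvd_mult[OF Suc.IH] dvd_smult[OF dvd_refl]])
qed

lemma Q_value:
  assumes N: "1 \<le> N" and i: "i < N"
  shows "x i ^ m = (\<Sum>k<N. mpoly_eval N (mpQ N m k) x * x i ^ k)"
proof -
  from Q_dvd[OF N, of x m] obtain g where g: "monom 1 m - rpoly N m x = (\<Prod>l<N. [:- x l, 1:]) * g"
    by (auto simp: dvd_def)
  have "poly (\<Prod>l<N. [:- x l, 1:]) (x i) = 0"
    using i by (simp add: poly_prod prod.remove[of "{..<N}" i])
  hence "poly (monom 1 m - rpoly N m x) (x i) = 0" unfolding g by simp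
  thus ?thesis by (simp add: rpoly_def poly_sum poly_monom)
qed



definition R1 :: "nat \<Rightarrow> (nat \<Rightarrow> 'a::comm_ring_1) \<Rightarrow> (nat \<Rightarrow> 'a) \<Rightarrow> (nat \<Rightarrow> 'a) \<Rightarrow> 'a mat" where
  "R1 n d p w = mat n n (\<lambda>(i,k). (if i = k then d i else 0) - p i * w k)"

lemma prod_list_diag_ones: "(\<And>i. i < n \<Longrightarrow> A $$ (i,i) = 1) \<Longrightarrow> dim_row A = n \<Longrightarrow> prod_list (diag_mat A) = 1"
proof -
  assume a: "\<And>i. i < n \<Longrightarrow> A $$ (i,i) = 1" and d: "dim_row A = n"
  have "diag_mat A = map (\<lambda>i. 1) [0..<n]" unfolding diag_mat_def d using a by (intro map_cong) auto
  thus ?thesis by (simp add: prod_list_replicate map_replicate_const)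
qed

lemma prod_list_diag: "dim_row A = n \<Longrightarrow> prod_list (diag_mat A) = (\<Prod>i<n. A $$ (i,i))"
  unfolding diag_mat_def by (simp add: prod.list_conv_set_nth lessThan_atLeast0)

lemma det_R1: "det (R1 n d p w) = (\<Prod>i<n. d i) - (\<Sum>j<n. p j * w j * (\<Prod>l\<in>{..<n}-{j}. d l))"
proof (induction n)
  case 0 thus ?case by (simp add: R1_def)
next
  case (Suc n)
  let ?A = "R1 (Suc n) d p w"
  have A: "?A \<in> carrier_mat (Suc n) (Suc n)" by (simp add: R1_def)
  define X where "X = mat (Suc n) (Suc n) (\<lambda>(i,k). if i = n then w k else ?A $$ (i,k))"
  have X: "X \<in> carrier_mat (Suc n) (Suc n)" by (simp add: X_def)
  have cofX: "cofactor X n k = cofactor ?A n k" for k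
    unfolding cofactor_def by (rule arg_cong[where f = "\<lambda>B. _ * det B"], rule eq_matI)
      (auto simp: mat_delete_def X_def R1_def)
  have lapA: "det ?A = (\<Sum>k<Suc n. ?A $$ (n,k) * cofactor ?A n k)"
    by (rule laplace_expansion_row[OF A]) simp
  have lapX: "det X = (\<Sum>k<Suc n. w k * cofactor ?A n k)"
    by (subst laplace_expansion_row[OF X, of n], simp, rule sum.cong, simp)
       (simp add: cofX, simp add: X_def)
  have "det ?A = (\<Sum>k<Suc n. (if n = k then d n else 0) * cofactor ?A n k) - p n * det X"
    unfolding lapA lapX
    by (simp add: R1_def sum_subtractf left_diff_distrib sum_distrib_left mult.assoc distrib_left)
  also have "(\<Sum>k<Suc n. (if n = k then d n else 0) * cofactor ?A n k) = d n * cofactor ?A n n"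
    by (simp add: if_distrib[of "\<lambda>x. x * _"] sum.delta)
  also have "cofactor ?A n n = det (R1 n d p w)"
    unfolding cofactor_def
    by (simp, rule arg_cong[where f = det], rule eq_matI) (auto simp: mat_delete_def R1_def)
  also have "det X = w n * (\<Prod>i<n. d i)"
  proof -
    define E :: "'a mat" where "E = mat (Suc n) (Suc n) (\<lambda>(i,k). if i = k then 1 else if k = n then - p i else 0)"
    define Y :: "'a mat" where "Y = mat (Suc n) (Suc n) (\<lambda>(i,k). if i = n then w k else if i = k then d i else 0)"
    have E: "E \<in> carrier_mat (Suc n) (Suc n)" and Y: "Y \<in> carrier_mat (Suc n) (Suc n)"
      by (auto simp: E_def Y_def)
    have XEY: "X = E * Y"
    proof (rule eq_matI)
      fix i k assume i: "i < dim_row (E * Y)" and k: "k < dim_col (E * Y)"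
      hence i: "i < Suc n" and k: "k < Suc n" using E Y by auto
      have "(E * Y) $$ (i,k) = (\<Sum>l<Suc n. E $$ (i,l) * Y $$ (l,k))"
        using i k E Y by (simp add: scalar_prod_def lessThan_atLeast0 col_def row_def)
      also have "\<dots> = (\<Sum>l<Suc n. (if l = i then 1 else if l = n then - p i else 0) * Y $$ (l,k))"
        by (rule sum.cong) (use i in \<open>auto simp: E_def\<close>)
      also have "\<dots> = Y $$ (i,k) + (if i = n then 0 else - p i * Y $$ (n,k))"
        using i by (auto simp: if_distrib[of "\<lambda>x. x * _"] sum.distrib sum.delta' sum.If_cases)
      also have "\<dots> = X $$ (i,k)" using i k by (auto simp: X_def Y_def R1_def)
      finally show "X $$ (i,k) = (E * Y) $$ (i,k)" ..
    qed (use E Y X in auto)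
    have dE: "det E = 1"
    proof (subst det_upper_triangular[OF _ E])
      show "upper_triangular E" unfolding upper_triangular_def E_def by auto
      show "prod_list (diag_mat E) = 1" by (rule prod_list_diag_ones[of "Suc n"]) (auto simp: E_def)
    qed
    have dY: "det Y = (\<Prod>i<Suc n. Y $$ (i,i))"
      by (subst det_lower_triangular[OF _ Y]) (auto simp: Y_def prod_list_diag)
    show ?thesis unfolding XEY det_mult[OF E Y] dE dY by (simp add: Y_def mult.commute)
  qed
  finally have "det ?A = d n * det (R1 n d p w) - p n * (w n * (\<Prod>i<n. d i))" .
  also have "\<dots> = (\<Prod>i<Suc n. d i) - (\<Sum>j<Suc n. p j * w j * (\<Prod>l\<in>{..<Suc n}-{j}. d l))"
  proof -
    have "(\<Prod>l\<in>{..<Suc n}-{j}. d l) = d n * (\<Prod>l\<in>{..<n}-{j}. d l)" if "j < n" for j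
    proof -
      have "{..<Suc n}-{j} = insert n ({..<n}-{j})" using that by auto
      thus ?thesis by simp
    qed
    hence "(\<Sum>j<n. p j * w j * (\<Prod>l\<in>{..<Suc n}-{j}. d l)) = d n * (\<Sum>j<n. p j * w j * (\<Prod>l\<in>{..<n}-{j}. d l))"
      by (simp add: sum_distrib_left mult_ac)
    moreover have "{..<Suc n}-{n} = {..<n}" by auto
    ultimately show ?thesis unfolding Suc.IH by (simp add: algebra_simps)
  qed
  finally show ?case .
qed



lemma tel_sum: "(\<Sum>t<m. a^(m-1-t) * (a - b) * b^t) + b^m = (a^m :: 'a::comm_ring_1)"
proof (induction m)
  case 0 thus ?case by simp
next
  case (Suc m)
  have "(\<Sum>t<Suc m. a^(Suc m-1-t) * (a - b) * b^t) = (\<Sum>t<m. a * (a^(m-1-t) * (a - b) * b^t)) + (a - b) * b^m"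
  proof (simp add: sum.lessThan_Suc, rule sum.cong)
    fix t assume "t \<in> {..<m}"
    hence "m - t = Suc (m - Suc t)" by auto
    thus "a ^ (m - t) * (a - b) * b ^ t = a * (a ^ (m - Suc t) * (a - b) * b ^ t)" by simp
  qed simp
  also have "\<dots> = a * ((\<Sum>t<m. a^(m-1-t) * (a - b) * b^t)) + (a - b) * b^m"
    by (simp add: sum_distrib_left)
  finally have e: "(\<Sum>t<Suc m. a^(Suc m-1-t) * (a - b) * b^t) = a * ((\<Sum>t<m. a^(m-1-t) * (a - b) * b^t)) + (a - b) * b^m" .
  have s: "(\<Sum>t<m. a^(m-1-t) * (a - b) * b^t) = a^m - b^m" using Suc.IH by (simp add: eq_diff_eq)
  show ?case unfolding e s by (simp add: algebra_simps)
qed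

lemma tel_sum2:
  assumes "k \<le> n"
  shows "(\<Sum>l<n. (if k \<le> l then a^(n-1-l) * (a - b) * b^(l-k) else 0)) + b^(n-k) = (a^(n-k) :: 'a::comm_ring_1)"
proof -
  have "(\<Sum>l<n. (if k \<le> l then a^(n-1-l) * (a - b) * b^(l-k) else 0)) = (\<Sum>l\<in>{k..<n}. a^(n-1-l) * (a - b) * b^(l-k))"
    by (simp add: sum.If_cases lessThan_atLeast0) (rule sum.cong, auto)
  also have "\<dots> = (\<Sum>t\<in>{0..<n-k}. a^(n-1-(t+k)) * (a - b) * b^(t+k-k))"
    using sum.shift_bounds_nat_ivl[of "\<lambda>l. a^(n-1-l) * (a - b) * b^(l-k)" 0 k "n-k"] assms by simp
  also have "\<dots> = (\<Sum>t<n-k. a^(n-k-1-t) * (a - b) * b^t)"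
    by (simp add: lessThan_atLeast0 algebra_simps)
  finally show ?thesis using tel_sum[where m="n-k" and a=a and b=b] by simp
qed

definition VM :: "nat \<Rightarrow> (nat \<Rightarrow> 'a::comm_ring_1) \<Rightarrow> 'a mat" where
  "VM n x = mat n n (\<lambda>(i,k). x i ^ (n - 1 - k))"

lemma det_VM_Suc: "det (VM (Suc n) x) = det (VM n x) * (\<Prod>i<n. x i - x n)"
proof -
  define B where "B = mat (Suc n) (Suc n) (\<lambda>(i,k). if k < n then x i ^ (n-1-k) * (x i - x n) else 1)"
  define T where "T = mat (Suc n) (Suc n) (\<lambda>(l,k). if k \<le> l then x n ^ (l - k) else 0)"
  have B: "B \<in> carrier_mat (Suc n) (Suc n)" and T: "T \<in> carrier_mat (Suc n) (Suc n)"
    by (auto simp: B_def T_def)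
  have VBT: "VM (Suc n) x = B * T"
  proof (rule eq_matI)
    fix i k assume "i < dim_row (B * T)" "k < dim_col (B * T)"
    hence i: "i < Suc n" and k: "k < Suc n" using B T by auto
    have "(B * T) $$ (i,k) = (\<Sum>l<Suc n. B $$ (i,l) * T $$ (l,k))"
      using i k B T by (simp add: scalar_prod_def lessThan_atLeast0 col_def row_def)
    also have "\<dots> = (\<Sum>l<n. (if k \<le> l then x i^(n-1-l) * (x i - x n) * x n^(l-k) else 0)) + x n^(n-k)"
      using i k by (simp add: sum.lessThan_Suc B_def T_def) (rule sum.cong, auto)
    also have "\<dots> = x i ^ (n - k)" using k by (intro tel_sum2) simp
    finally show "VM (Suc n) x $$ (i,k) = (B * T) $$ (i,k)" using i k by (simp add: VM_def)
  qed (use B T in \<open>auto simp: VM_def\<close>)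
  have dT: "det T = 1"
  proof (subst det_lower_triangular[OF _ T])
    show "\<And>i j. i < j \<Longrightarrow> j < Suc n \<Longrightarrow> T $$ (i, j) = 0" by (auto simp: T_def)
    have "diag_mat T = map (\<lambda>i. 1) [0..<Suc n]" unfolding diag_mat_def using T
      by (intro map_cong) (auto simp: T_def)
    thus "prod_list (diag_mat T) = 1" by (simp add: map_replicate_const)
  qed
  have "det B = (\<Sum>k<Suc n. B $$ (n,k) * cofactor B n k)"
    by (rule laplace_expansion_row[OF B]) simp
  also have "\<dots> = cofactor B n n"
    by (simp add: sum.lessThan_Suc B_def)
  also have "\<dots> = det (mat n n (\<lambda>(i,k). x i ^ (n-1-k) * (x i - x n)))"
    unfolding cofactor_def
    by (simp, rule arg_cong[where f = det], rule eq_matI) (auto simp: mat_delete_def B_def)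
  also have "mat n n (\<lambda>(i,k). x i ^ (n-1-k) * (x i - x n)) =
      mat\<^sub>r n n (\<lambda>i. (x i - x n) \<cdot>\<^sub>v vec n (\<lambda>k. x i ^ (n-1-k)))"
    by (rule eq_matI) auto
  also have "det \<dots> = prod (\<lambda>i. x i - x n) {0..<n} * det (mat\<^sub>r n n (\<lambda>i. vec n (\<lambda>k. x i ^ (n-1-k))))"
    by (rule det_rows_mul) auto
  also have "mat\<^sub>r n n (\<lambda>i. vec n (\<lambda>k. x i ^ (n-1-k))) = VM n x"
    by (rule eq_matI) (auto simp: VM_def)
  finally have dB: "det B = det (VM n x) * (\<Prod>i<n. x i - x n)"
    by (simp add: lessThan_atLeast0 mult.commute)
  show ?thesis unfolding VBT det_mult[OF B T] dT dB by simp
qed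

lemma alternant0_vandermonde: "alternant N (\<lambda>_. 0) x = vandermonde N x"
proof -
  have "alternant N (\<lambda>_. 0) x = det (VM N x)" by (simp add: alternant_def VM_def)
  also have "\<dots> = vandermonde N x"
  proof (induction N)
    case 0 show ?case by (simp add: VM_def vandermonde_def)
  next
    case (Suc N) thus ?case by (simp add: det_VM_Suc vandermonde_def)
  qed
  finally show ?thesis .
qed



lemma alt_hook:
  fixes x :: "nat \<Rightarrow> 'a::comm_ring_1"
  assumes N: "1 \<le> N" "N \<le> M" and j: "j < N"
  shows "alternant N (hook M N j) x =
     (-1)^(N-1-j) * mpoly_eval N (mpQ N M j) x * alternant N (\<lambda>_. 0) x"
proof -
  define r where "r = N - 1 - j"
  have r: "r < N" using j unfolding r_def by simp
  define q where "q s = mpoly_eval N (mpQ N M s) x" for s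
  define K where "K = mat N N (\<lambda>(i,k). if k = r then x i ^ M else x i ^ (N-1-k))"
  define U where "U = mat N N (\<lambda>(i,k). x i ^ (N-1-k))"
  define T where "T = mat N N (\<lambda>(l,k). if k = r then q (N-1-l) else (if l = k then 1 else 0))"
  have K: "K \<in> carrier_mat N N" and U: "U \<in> carrier_mat N N" and T: "T \<in> carrier_mat N N"
    by (auto simp: K_def U_def T_def)
  have H: "mat N N (\<lambda>(i,k). x i ^ (hook M N j k + (N - 1 - k))) = swap_col_to_front K r"
    unfolding swap_col_to_front_result[OF K r]
    by (rule eq_matI) (use N j in \<open>auto simp: K_def hook_def r_def\<close>)
  have KUT: "K = U * T"
  proof (rule eq_matI)
    fix i k assume "i < dim_row (U * T)" "k < dim_col (U * T)"
    hence i: "i < N" and k: "k < N" using U T by auto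
    have "(U * T) $$ (i,k) = (\<Sum>l<N. U $$ (i,l) * T $$ (l,k))"
      using i k U T by (simp add: scalar_prod_def lessThan_atLeast0 col_def row_def)
    also have "\<dots> = K $$ (i,k)"
    proof (cases "k = r")
      case True
      have "(\<Sum>l<N. U $$ (i,l) * T $$ (l,k)) = (\<Sum>l<N. x i ^ (N - Suc l) * q (N - Suc l))"
        by (rule sum.cong) (use True i k in \<open>auto simp: U_def T_def\<close>)
      also have "\<dots> = (\<Sum>s<N. x i ^ s * q s)"
        by (rule sum.nat_diff_reindex[where g = "\<lambda>s. x i ^ s * q s"])
      also have "\<dots> = x i ^ M"
        using Q_value[OF N(1) i, of x M] by (simp add: q_def mult.commute)
      finally show ?thesis using True i k by (simp add: K_def)
    next
      case False
      have "(\<Sum>l<N. U $$ (i,l) * T $$ (l,k)) = (\<Sum>l<N. if l = k then x i ^ (N-1-k) else 0)"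
        by (rule sum.cong) (use False i k in \<open>auto simp: U_def T_def\<close>)
      also have "\<dots> = x i ^ (N-1-k)" using k by (simp add: sum.delta')
      finally show ?thesis using False i k by (simp add: K_def)
    qed
    finally show "K $$ (i,k) = (U * T) $$ (i,k)" ..
  qed (use U T in \<open>auto simp: K_def\<close>)
  define d where "d l = (if l = r then 0 else (1::'a))" for l
  define p where "p l = - q (N - 1 - l)" for l
  define w where "w k = (if k = r then 1 else (0::'a))" for k
  have TR: "T = R1 N d p w"
    by (rule eq_matI) (auto simp: T_def R1_def d_def p_def w_def)
  have dT: "det T = q j"
  proof -
    have "(\<Prod>i<N. d i) = 0" using r by (auto simp: d_def intro!: prod_zero)
    moreover have "(\<Sum>l<N. p l * w l * (\<Prod>i\<in>{..<N}-{l}. d i)) = p r * (\<Prod>i\<in>{..<N}-{r}. d i)"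
      using r by (simp add: w_def if_distrib[of "\<lambda>x. _ * x * _"] sum.delta' cong: if_cong)
    moreover have "(\<Prod>i\<in>{..<N}-{r}. d i) = 1" by (rule prod.neutral) (auto simp: d_def)
    ultimately show ?thesis unfolding TR det_R1 using j by (simp add: p_def r_def)
  qed
  have "alternant N (hook M N j) x = det (swap_col_to_front K r)"
    unfolding alternant_def H ..
  also have "\<dots> = (-1)^r * det K" by (rule swap_col_to_front_det[OF K r])
  also have "det K = det U * q j" unfolding KUT det_mult[OF U T] dT ..
  also have "det U = alternant N (\<lambda>_. 0) x" by (simp add: alternant_def U_def)
  finally show ?thesis by (simp add: r_def q_def mult_ac)
qed



lemma digit_step:
  fixes B :: nat
  assumes "B > 0" "a0 < B" "b0 < B" "a0 + B * X = b0 + B * Y"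
  shows "a0 = b0 \<and> X = Y"
proof -
  have "a0 = (a0 + B * X) mod B" using assms(2) by (simp only: mod_mult_self2 mod_less)
  also have "\<dots> = (b0 + B * Y) mod B" using assms(4) by (simp only:)
  also have "\<dots> = b0" using assms(3) by (simp only: mod_mult_self2 mod_less)
  finally have e: "a0 = b0" .
  thus ?thesis using assms(1,4) by simp
qed

lemma digits_inj:
  fixes B :: nat
  assumes "B > 0" "\<forall>i<n. a i < B" "\<forall>i<n. b i < B"
    "(\<Sum>i<n. a i * B^i) = (\<Sum>i<n. b i * B^i)"
  shows "\<forall>i<n. a i = b i"
  using assms(2-4)
proof (induction n arbitrary: a b)
  case 0 thus ?case by simp
next
  case (Suc n)
  have ea: "(\<Sum>i<Suc n. a i * B^i) = a 0 + B * (\<Sum>i<n. a (Suc i) * B^i)" for a :: "nat \<Rightarrow> nat"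
    by (subst sum.lessThan_Suc_shift) (simp add: sum_distrib_left mult_ac del: sum.lessThan_Suc)
  have a0: "a 0 < B" "b 0 < B" using Suc.prems by auto
  from digit_step[OF assms(1) a0] Suc.prems(3)[unfolded ea]
  have e0: "a 0 = b 0" and es: "(\<Sum>i<n. a (Suc i) * B^i) = (\<Sum>i<n. b (Suc i) * B^i)" by auto
  have p1: "\<forall>i<n. a (Suc i) < B" "\<forall>i<n. b (Suc i) < B" using Suc.prems(1,2) by auto
  have "\<forall>i<n. a (Suc i) = b (Suc i)" by (rule Suc.IH[OF p1 es])
  thus ?case using e0 by (auto simp: less_Suc_eq_0_disj)
qed
lemma mpoly_zero_rat:
  assumes mp: "is_mpoly N P" and z: "\<forall>x::nat\<Rightarrow>rat. inj_on x {..<N} \<longrightarrow> mpoly_eval N P x = 0"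
  shows "P m0 = 0"
proof (rule ccontr)
  assume nz: "P m0 \<noteq> 0"
  let ?S = "{m. P m \<noteq> 0}"
  have fS: "finite ?S" and vz: "\<And>m i. P m \<noteq> 0 \<Longrightarrow> i \<ge> N \<Longrightarrow> m i = 0"
    using mp unfolding is_mpoly_def by auto
  define D where "D = (\<lambda>(m,i). m i) ` (?S \<times> {..<N})"
  have fD: "finite D" unfolding D_def using fS by auto
  define B where "B = Max (insert 0 D) + 2"
  have B2: "B \<ge> 2" unfolding B_def by simp
  have Bl: "m i < B" if "m \<in> ?S" "i < N" for m i
  proof -
    have "m i \<in> D" unfolding D_def using that by force
    hence "m i \<le> Max (insert 0 D)" using fD by simp
    thus ?thesis unfolding B_def by simp
  qed
  define enc where "enc m = (\<Sum>i<N. m i * B^i)" for m :: "nat \<Rightarrow> nat"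
  have enc_inj: "m = m'" if "m \<in> ?S" "m' \<in> ?S" "enc m = enc m'" for m m'
  proof
    fix i show "m i = m' i"
    proof (cases "i < N")
      case True
      have "\<forall>i<N. m i = m' i"
        by (rule digits_inj[of B]) (use B2 that Bl enc_def in auto)
      thus ?thesis using True by auto
    next
      case False thus ?thesis using vz[of m i] vz[of m' i] that by auto
    qed
  qed
  define p :: "rat poly" where "p = (\<Sum>m\<in>?S. monom (of_int (P m)) (enc m))"
  have "coeff p (enc m0) = (\<Sum>m\<in>?S. if m = m0 then of_int (P m) else 0)"
    unfolding p_def coeff_sum coeff_monom
    by (rule sum.cong) (use enc_inj nz in auto)
  also have "\<dots> = of_int (P m0)" using fS nz by (simp add: sum.delta')
  finally have "coeff p (enc m0) \<noteq> 0" using nz by simp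
  hence p0: "p \<noteq> 0" by auto
  have fin: "finite {t. poly p t = 0}" by (rule poly_roots_finite[OF p0])
  have inf: "infinite (range (\<lambda>k::nat. of_nat k + (2::rat)))"
    by (rule range_inj_infinite) (auto simp: inj_on_def)
  obtain t where t: "t \<in> range (\<lambda>k::nat. of_nat k + (2::rat))" "poly p t \<noteq> 0"
    using infinite_super[of "range (\<lambda>k::nat. of_nat k + (2::rat))" "{t. poly p t = 0}"] fin inf
    by auto
  have t1: "t > 1" using t(1) by auto
  define x where "x = (\<lambda>i. t ^ (B ^ i))"
  have "inj_on x {..<N}"
  proof (rule inj_onI)
    fix i j assume "x i = x j"
    hence "B ^ i = B ^ j" unfolding x_def using t1 power_inject_exp by blast
    thus "i = j" using B2 power_inject_exp[of B i j] by auto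
  qed
  hence "mpoly_eval N P x = 0" using z by auto
  moreover have "mpoly_eval N P x = poly p t"
  proof -
    have pe: "(\<Prod>i<N. (t^(B^i))^(m i)) = t^(enc m)" for m
      unfolding enc_def power_sum by (rule prod.cong) (simp_all add: power_mult[symmetric] mult.commute)
    have "mpoly_eval N P x = (\<Sum>m\<in>?S. of_int (P m) * t ^ (enc m))"
      unfolding mpoly_eval_def x_def pe by simp
    thus ?thesis unfolding p_def by (simp add: poly_sum poly_monom)
  qed
  ultimately show False using t by simp
qed



definition S_hook :: "nat \<Rightarrow> nat \<Rightarrow> nat \<Rightarrow> mp" where
  "S_hook M N j = mp_mult (mp_const ((-1)^(N-1-j))) (mpQ N M j)"

lemma is_mpoly_S_hook: "is_mpoly N (S_hook M N j)"
  unfolding S_hook_def by (intro is_mpoly_mult is_mpoly_const is_mpoly_mpQ)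

lemma eval_S_hook: "mpoly_eval N (S_hook M N j) x = (-1)^(N-1-j) * mpoly_eval N (mpQ N M j) x"
  unfolding S_hook_def by (simp add: mpe_mult is_mpoly_const is_mpoly_mpQ mpe_const)

lemma vandermonde_nz:
  fixes x :: "nat \<Rightarrow> 'a::field"
  assumes "inj_on x {..<N}"
  shows "vandermonde N x \<noteq> 0"
  unfolding vandermonde_def using assms
  by (auto simp: prod_zero_iff inj_on_def)

lemma schur_mpoly_hook:
  assumes N: "1 \<le> N" "N \<le> M" and j: "j < N"
  shows "schur_mpoly N (hook M N j) = S_hook M N j"
  unfolding schur_mpoly_def
proof (rule the_equality)
  show "is_mpoly N (S_hook M N j) \<and>
    (\<forall>x::nat\<Rightarrow>rat. inj_on x {..<N} \<longrightarrow>
      mpoly_eval N (S_hook M N j) x * alternant N (\<lambda>_. 0) x = alternant N (hook M N j) x)"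
  proof (intro conjI allI impI is_mpoly_S_hook)
    fix x :: "nat \<Rightarrow> rat"
    show "mpoly_eval N (S_hook M N j) x * alternant N (\<lambda>_. 0) x = alternant N (hook M N j) x"
      using alt_hook[OF N j, of x] by (simp add: eval_S_hook mult_ac)
  qed
next
  fix P
  assume a: "is_mpoly N P \<and>
    (\<forall>x::nat\<Rightarrow>rat. inj_on x {..<N} \<longrightarrow>
      mpoly_eval N P x * alternant N (\<lambda>_. 0) x = alternant N (hook M N j) x)"
  let ?D = "mp_add P (mp_neg (S_hook M N j))"
  have mD: "is_mpoly N ?D" using a by (intro is_mpoly_add is_mpoly_neg is_mpoly_S_hook) auto
  have "\<forall>x::nat\<Rightarrow>rat. inj_on x {..<N} \<longrightarrow> mpoly_eval N ?D x = 0"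
  proof (intro allI impI)
    fix x :: "nat \<Rightarrow> rat" assume inj: "inj_on x {..<N}"
    have e1: "mpoly_eval N P x * alternant N (\<lambda>_. 0) x = alternant N (hook M N j) x" using a inj by auto
    have e2: "mpoly_eval N (S_hook M N j) x * alternant N (\<lambda>_. 0) x = alternant N (hook M N j) x"
      using alt_hook[OF N j, of x] by (simp add: eval_S_hook mult_ac)
    have nz: "alternant N (\<lambda>_. 0) x \<noteq> 0"
      unfolding alternant0_vandermonde by (rule vandermonde_nz[OF inj])
    have "mpoly_eval N P x = mpoly_eval N (S_hook M N j) x"
      using e1 e2 nz by (metis mult_right_cancel)
    thus "mpoly_eval N ?D x = 0"
      using a by (simp add: mpe_add mpe_neg is_mpoly_neg is_mpoly_S_hook)
  qed
  hence "?D m = 0" for m by (rule mpoly_zero_rat[OF mD])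
  thus "P = S_hook M N j" by (auto simp: mp_add_def mp_neg_def)
qed

lemma schur_hook:
  assumes N: "1 \<le> N" "N \<le> M" and j: "j < N"
  shows "schur N (hook M N j) x = (-1)^(N-1-j) * mpoly_eval N (mpQ N M j) x"
  unfolding schur_def schur_mpoly_hook[OF N j] eval_S_hook ..



lemma const_pow: "[:a:] ^ n = [:a ^ n :: 'a::comm_ring_1:]"
  by (induction n) (auto simp: one_pCons)

lemma lin_pow_expand:
  "[:-1,1:] ^ i = (\<Sum>k\<le>i. monom (of_nat (i choose k) * (-1)^(i-k)) k :: int poly)"
proof -
  have "[:-1,1:] = [:0,1:] + [:-1::int:]" by simp
  hence "[:-1,1:] ^ i = (\<Sum>k\<le>i. of_nat (i choose k) * [:0,1:]^k * [:-1::int:]^(i-k))"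
    using binomial_ring[of "[:0,1::int:]" "[:-1:]" i] by simp
  also have "\<dots> = (\<Sum>k\<le>i. monom (of_nat (i choose k) * (-1)^(i-k)) k)"
  proof (rule sum.cong[OF refl])
    fix k
    show "of_nat (i choose k) * [:0,1:]^k * [:-1::int:]^(i-k) = monom (of_nat (i choose k) * (-1)^(i-k)) k"
      unfolding const_pow of_nat_poly monom_altdef
      by (simp add: smult_smult mult.commute)
  qed
  finally show ?thesis .
qed

lemma coeff_lin_pow:
  "coeff ([:-1,1:] ^ i :: int poly) j = (if j \<le> i then of_nat (i choose j) * (-1)^(i-j) else 0)"
  unfolding lin_pow_expand coeff_sum coeff_monom by (simp add: sum.delta)

lemma alt_partial:
  "(\<Sum>t\<le>n. (-1)^t * int (Suc a choose t)) = (-1)^n * int (a choose n)"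
proof (induction n)
  case 0 thus ?case by simp
next
  case (Suc n)
  have "(\<Sum>t\<le>Suc n. (-1)^t * int (Suc a choose t)) = (-1)^n * int (a choose n) + (-1)^(Suc n) * int (Suc a choose Suc n)"
    using Suc.IH by simp
  also have "int (Suc a choose Suc n) = int (a choose n) + int (a choose Suc n)" by simp
  finally show ?case by (simp add: algebra_simps)
qed

lemma comb_identity:
  assumes "j < N" "N \<le> M"
  shows "(\<Sum>i<N. int (M choose i) * (if j \<le> i then int (i choose j) * (-1)^(i-j) else 0))
         = (-1)^(N-1-j) * int ((M choose j) * ((M - j - 1) choose (N - j - 1)))"
proof -
  have "(\<Sum>i<N. int (M choose i) * (if j \<le> i then int (i choose j) * (-1)^(i-j) else 0))
      = (\<Sum>i\<in>{j..<N}. int (M choose i) * int (i choose j) * (-1)^(i-j))"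
    by (simp add: sum.If_cases lessThan_atLeast0 if_distrib[of "\<lambda>x. _ * x"] mult.assoc)
       (rule sum.cong, auto)
  also have "\<dots> = (\<Sum>t\<in>{0..<N-j}. int (M choose (t+j)) * int ((t+j) choose j) * (-1)^(t+j-j))"
    using sum.shift_bounds_nat_ivl[of "\<lambda>i. int (M choose i) * int (i choose j) * (-1)^(i-j)" 0 j "N-j"] assms
    by simp
  also have "\<dots> = (\<Sum>t\<le>N-1-j. int (M choose j) * ((-1)^t * int (Suc (M-j-1) choose t)))"
  proof -
    have "{0..<N-j} = {..N-1-j}" using assms by auto
    moreover have "int (M choose (t+j)) * int ((t+j) choose j) * (-1)^(t+j-j) = int (M choose j) * ((-1)^t * int (Suc (M-j-1) choose t))"
      if "t \<in> {0..<N-j}" for t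
    proof -
      have "(M choose (t+j)) * ((t+j) choose j) = (M choose j) * ((M - j) choose (t + j - j))"
        by (rule choose_mult) (use that assms in auto)
      moreover have "Suc (M-j-1) = M - j" using assms by auto
      ultimately show ?thesis by (simp add: of_nat_mult[symmetric] del: of_nat_mult)
    qed
    ultimately show ?thesis by (auto intro: sum.cong)
  qed
  also have "\<dots> = int (M choose j) * ((-1)^(N-1-j) * int ((M-j-1) choose (N-1-j)))"
    by (simp add: sum_distrib_left[symmetric] alt_partial)
  finally show ?thesis by (simp add: algebra_simps)
qed

lemma Q_at_ones:
  assumes N: "1 \<le> N" "N \<le> M" and j: "j < N"
  shows "mpoly_eval N (mpQ N M j) (\<lambda>_. 1 :: int) = (-1)^(N-1-j) * int ((M choose j) * ((M - j - 1) choose (N - j - 1)))"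
proof -
  let ?one = "\<lambda>_::nat. 1::int"
  let ?L = "[:-1,1::int:]"
  define r where "r = rpoly N M ?one"
  define s where "s = (\<Sum>i<N. smult (int (M choose i)) (?L ^ i))"
  have e: "(\<Prod>l<N. [:- ?one l, 1:]) = ?L ^ N" by simp
  have d1: "?L ^ N dvd (monom 1 M - r)" using Q_dvd[OF N(1), of ?one M] unfolding r_def e .
  have "?L + 1 = [:0,1:]" by (simp add: one_pCons)
  hence "monom 1 M = (?L + 1) ^ M" by (simp add: monom_altdef)
  also have "\<dots> = (\<Sum>i\<le>M. of_nat (M choose i) * ?L ^ i)"
    using binomial_ring[of ?L 1 M] by simp
  also have "\<dots> = (\<Sum>i\<le>M. smult (int (M choose i)) (?L ^ i))"
    by (simp add: of_nat_poly)
  also have "{..M} = {..<N} \<union> {N..M}" using N by auto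
  finally have "monom 1 M = s + (\<Sum>i\<in>{N..M}. smult (int (M choose i)) (?L ^ i))"
    unfolding s_def by (subst (asm) sum.union_disjoint) auto
  moreover have "?L ^ N dvd (\<Sum>i\<in>{N..M}. smult (int (M choose i)) (?L ^ i))"
  proof (rule dvd_sum)
    fix i assume "i \<in> {N..M}"
    hence "?L ^ i = ?L ^ N * ?L ^ (i - N)" by (simp add: power_add[symmetric])
    thus "?L ^ N dvd smult (int (M choose i)) (?L ^ i)" by (simp add: dvd_smult)
  qed
  ultimately have d2: "?L ^ N dvd (monom 1 M - s)" by simp
  have "?L ^ N dvd ((monom 1 M - r) - (monom 1 M - s))" using d1 d2 by (rule dvd_diff)
  hence d3: "?L ^ N dvd (s - r)" by simp
  have deg: "degree (s - r) \<le> N - 1"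
  proof (rule degree_diff_le)
    show "degree s \<le> N - 1" unfolding s_def
      by (rule degree_sum_le) (auto intro: order.trans[OF degree_smult_le] simp: degree_linear_power)
    show "degree r \<le> N - 1" unfolding r_def rpoly_def
      by (rule degree_sum_le) (auto intro: order.trans[OF degree_monom_le])
  qed
  have "s - r = 0"
  proof (rule ccontr)
    assume "s - r \<noteq> 0"
    hence "degree (?L ^ N) \<le> degree (s - r)" by (rule dvd_imp_degree_le[OF d3])
    thus False using deg N by (simp add: degree_linear_power)
  qed
  hence "coeff r j = coeff s j" by simp
  moreover have "coeff r j = mpoly_eval N (mpQ N M j) ?one"
    unfolding r_def rpoly_def coeff_sum_monom using j by simp
  moreover have "coeff s j = (\<Sum>i<N. int (M choose i) * (if j \<le> i then int (i choose j) * (-1)^(i-j) else 0))"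
    unfolding s_def coeff_sum coeff_smult coeff_lin_pow by simp
  ultimately show ?thesis using comb_identity[OF j N(2)] by simp
qed

lemma part2:
  assumes N: "1 \<le> N" "N \<le> M"
  shows "\<forall>j<N. schur N (hook M N j) (\<lambda>_. 1 :: int) = int ((M choose j) * ((M - j - 1) choose (N - j - 1)))"
proof (intro allI impI)
  fix j assume j: "j < N"
  show "schur N (hook M N j) (\<lambda>_. 1 :: int) = int ((M choose j) * ((M - j - 1) choose (N - j - 1)))"
    unfolding schur_hook[OF N j] Q_at_ones[OF N j] by (simp flip: power_add)
qed



interpretation cph: comm_ring_hom "(\<lambda>a. [:a:]) :: 'a::comm_ring_1 \<Rightarrow> 'a poly"
  by unfold_locales (auto simp: one_pCons)

lemma const_mult_left: "[:a:] * p = smult a p"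
  by (simp add: mult_pCons_left)

lemma smult_sum2: "smult a (sum f A) = (\<Sum>x\<in>A. smult a (f x))"
  by (induction A rule: infinite_finite_induct) (auto simp: smult_add_right)

lemma coeff_pCons0: "coeff [:0, a:] n = (if n = 1 then a else 0)"
  by (cases n) (auto simp: coeff_pCons split: nat.splits)

lemma main_factor:
  fixes c u v :: "nat \<Rightarrow> 'a::field" and M N :: nat
  assumes N: "1 \<le> N" "N \<le> M"
  defines "qu \<equiv> \<lambda>s. mpoly_eval N (mpQ N M s) u"
  defines "qv \<equiv> \<lambda>s. mpoly_eval N (mpQ N M s) v"
  shows "det (mat N N (\<lambda>(i,k). pt M N c (u i * v k))) =
     [:vandermonde N u * vandermonde N v:] *
     det (R1 N (\<lambda>k. [:0, c (N-1-k):]) (\<lambda>k. [:qu (N-1-k):]) (\<lambda>k. [:qv (N-1-k):]))"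
proof -
  let ?G = "R1 N (\<lambda>k. [:0, c (N-1-k):]) (\<lambda>k. [:qu (N-1-k):]) (\<lambda>k. [:qv (N-1-k):])"
  define U0 where "U0 = VM N u"
  define W0 where "W0 = transpose_mat (VM N v)"
  let ?U = "map_mat (\<lambda>a. [:a:]) U0"
  let ?W = "map_mat (\<lambda>a. [:a:]) W0"
  have U: "?U \<in> carrier_mat N N" and W: "?W \<in> carrier_mat N N" and G: "?G \<in> carrier_mat N N"
    by (auto simp: U0_def W0_def VM_def R1_def)
  have eq: "mat N N (\<lambda>(i,k). pt M N c (u i * v k)) = ?U * ?G * ?W"
  proof (rule eq_matI)
    fix i l assume "i < dim_row (?U * ?G * ?W)" "l < dim_col (?U * ?G * ?W)"
    hence i: "i < N" and l: "l < N" using U W G by auto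
    have ent: "(?U * ?G * ?W) $$ (i,l) = (\<Sum>k2<N. \<Sum>k1<N. smult (U0 $$ (i,k1) * W0 $$ (k2,l)) (?G $$ (k1,k2)))"
    proof -
      show ?thesis
        using i l U W G
        by (simp add: scalar_prod_def lessThan_atLeast0 col_def row_def U0_def W0_def VM_def
            const_mult_left mult.commute[of _ "[:_:]"] smult_sum2 smult_smult mult.commute[of "u _ ^ _"])
    qed
    have Gc: "coeff (?G $$ (k1,k2)) n = (if k1 = k2 \<and> n = 1 then c (N-1-k1) else 0) - (if n = 0 then qu (N-1-k1) * qv (N-1-k2) else 0)"
      if "k1 < N" "k2 < N" for k1 k2 n
      using that by (auto simp: R1_def coeff_pCons0 const_mult_left coeff_pCons split: nat.splits)
    have sumU: "(\<Sum>k1<N. U0 $$ (i,k1) * qu (N-1-k1)) = u i ^ M"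
    proof -
      have "(\<Sum>k1<N. U0 $$ (i,k1) * qu (N-1-k1)) = (\<Sum>k1<N. u i ^ (N - Suc k1) * qu (N - Suc k1))"
        by (rule sum.cong) (use i in \<open>auto simp: U0_def VM_def\<close>)
      also have "\<dots> = (\<Sum>s<N. u i ^ s * qu s)" by (rule sum.nat_diff_reindex[where g = "\<lambda>s. u i ^ s * qu s"])
      also have "\<dots> = u i ^ M" using Q_value[OF N(1) i, of u M] by (simp add: qu_def mult.commute)
      finally show ?thesis .
    qed
    have sumW: "(\<Sum>k2<N. W0 $$ (k2,l) * qv (N-1-k2)) = v l ^ M"
    proof -
      have "(\<Sum>k2<N. W0 $$ (k2,l) * qv (N-1-k2)) = (\<Sum>k2<N. v l ^ (N - Suc k2) * qv (N - Suc k2))"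
        by (rule sum.cong) (use l in \<open>auto simp: W0_def VM_def\<close>)
      also have "\<dots> = (\<Sum>s<N. v l ^ s * qv s)" by (rule sum.nat_diff_reindex[where g = "\<lambda>s. v l ^ s * qv s"])
      also have "\<dots> = v l ^ M" using Q_value[OF N(1) l, of v M] by (simp add: qv_def mult.commute)
      finally show ?thesis .
    qed
    have sumC: "(\<Sum>k1<N. U0 $$ (i,k1) * W0 $$ (k1,l) * c (N-1-k1)) = (\<Sum>s<N. c s * (u i * v l) ^ s)"
    proof -
      have "(\<Sum>k1<N. U0 $$ (i,k1) * W0 $$ (k1,l) * c (N-1-k1)) = (\<Sum>k1<N. c (N - Suc k1) * (u i * v l) ^ (N - Suc k1))"
        by (rule sum.cong) (use i l in \<open>auto simp: U0_def W0_def VM_def power_mult_distrib\<close>)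
      also have "\<dots> = (\<Sum>s<N. c s * (u i * v l) ^ s)" by (rule sum.nat_diff_reindex[where g = "\<lambda>s. c s * (u i * v l) ^ s"])
      finally show ?thesis .
    qed
    show "mat N N (\<lambda>(i,k). pt M N c (u i * v k)) $$ (i,l) = (?U * ?G * ?W) $$ (i,l)"
    proof (rule poly_eqI)
      fix n
      have "coeff ((?U * ?G * ?W) $$ (i,l)) n =
         (\<Sum>k2<N. \<Sum>k1<N. U0 $$ (i,k1) * W0 $$ (k2,l) *
            ((if k1 = k2 \<and> n = 1 then c (N-1-k1) else 0) - (if n = 0 then qu (N-1-k1) * qv (N-1-k2) else 0)))"
        unfolding ent coeff_sum coeff_smult by (intro sum.cong refl) (subst Gc; simp)
      also have "\<dots> = (if n = 1 then (\<Sum>s<N. c s * (u i * v l) ^ s) else 0) - (if n = 0 then u i ^ M * v l ^ M else 0)"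
      proof (cases "n = 0")
        case True
        have "(\<Sum>k2<N. \<Sum>k1<N. U0 $$ (i,k1) * W0 $$ (k2,l) *
            ((if k1 = k2 \<and> n = 1 then c (N-1-k1) else 0) - (if n = 0 then qu (N-1-k1) * qv (N-1-k2) else 0)))
          = (\<Sum>k2<N. \<Sum>k1<N. - ((W0 $$ (k2,l) * qv (N-1-k2)) * (U0 $$ (i,k1) * qu (N-1-k1))))"
          by (intro sum.cong refl) (simp add: True mult_ac)
        also have "\<dots> = - ((\<Sum>k2<N. W0 $$ (k2,l) * qv (N-1-k2)) * (\<Sum>k1<N. U0 $$ (i,k1) * qu (N-1-k1)))"
          by (simp add: sum_product sum_negf)
        finally show ?thesis unfolding sumU sumW using True by (simp add: mult.commute)
      next
        case False
        have "(\<Sum>k2<N. \<Sum>k1<N. U0 $$ (i,k1) * W0 $$ (k2,l) *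
            ((if k1 = k2 \<and> n = 1 then c (N-1-k1) else 0) - (if n = 0 then qu (N-1-k1) * qv (N-1-k2) else 0)))
          = (\<Sum>k2<N. \<Sum>k1<N. (if k1 = k2 then (if n = 1 then U0 $$ (i,k1) * W0 $$ (k2,l) * c (N-1-k1) else 0) else 0))"
          by (intro sum.cong refl) (simp add: False)
        also have "\<dots> = (\<Sum>k2<N. (if n = 1 then U0 $$ (i,k2) * W0 $$ (k2,l) * c (N-1-k2) else 0))"
          by (intro sum.cong refl) (simp only: sum.delta finite_lessThan, simp)
        also have "\<dots> = (if n = 1 then (\<Sum>k1<N. U0 $$ (i,k1) * W0 $$ (k1,l) * c (N-1-k1)) else 0)"
          by simp
        finally show ?thesis unfolding sumC using False by simp
      qed
      also have "\<dots> = coeff (mat N N (\<lambda>(i,k). pt M N c (u i * v k)) $$ (i,l)) n"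
        using i l by (cases n) (auto simp: pt_def power_mult_distrib coeff_pCons split: nat.splits)
      finally show "coeff (mat N N (\<lambda>(i,k). pt M N c (u i * v k)) $$ (i,l)) n = coeff ((?U * ?G * ?W) $$ (i,l)) n" ..
    qed
  qed (use U W G in auto)
  have dU: "det ?U = [:vandermonde N u:]"
    unfolding cph.hom_det U0_def by (simp add: alternant0_vandermonde[symmetric] alternant_def VM_def)
  have dW: "det ?W = [:vandermonde N v:]"
  proof -
    have "det W0 = det (VM N v)" unfolding W0_def by (rule det_transpose[of _ N]) (simp add: VM_def)
    thus ?thesis
      unfolding cph.hom_det by (simp add: alternant0_vandermonde[symmetric] alternant_def VM_def)
  qed
  have "det (mat N N (\<lambda>(i,k). pt M N c (u i * v k))) = det ?U * det ?G * det ?W"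
    unfolding eq det_mult[OF mult_carrier_mat[OF U G] W] det_mult[OF U G] ..
  thus ?thesis unfolding dU dW by (simp add: mult_ac)
qed



lemma prod_smult_const: "finite S \<Longrightarrow> (\<Prod>l\<in>S. smult (f l) X) = smult (\<Prod>l\<in>S. f l) (X ^ card S)"
  by (induction S rule: finite_induct) (auto simp: mult_smult_left mult_smult_right smult_smult mult_ac)

lemma part1:
  fixes c u v :: "nat \<Rightarrow> 'a::field" and M N :: nat
  assumes N: "1 \<le> N" "N \<le> M" and c: "\<forall>j<N. c j \<noteq> 0"
  shows "det (mat N N (\<lambda>(i,k). pt M N c (u i * v k))) =
           [:0, 1:] ^ (N - 1) *
           [: vandermonde N u * vandermonde N v * (\<Prod>j<N. c j) :] *
           ([:0, 1:] - [: \<Sum>j<N. schur N (hook M N j) u * schur N (hook M N j) v / c j :])"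
proof -
  define qu where "qu = (\<lambda>s. mpoly_eval N (mpQ N M s) u)"
  define qv where "qv = (\<lambda>s. mpoly_eval N (mpQ N M s) v)"
  let ?X = "[:0, 1::'a:]"
  define P where "P = (\<Prod>j<N. c j)"
  have ss: "schur N (hook M N j) u * schur N (hook M N j) v = qu j * qv j" if "j < N" for j
    unfolding schur_hook[OF N that] qu_def qv_def
    by (simp add: mult_ac flip: power_add)
  have Pr: "(\<Prod>k<N. c (N - Suc k)) = P"
    unfolding P_def using prod.nat_diff_reindex[where g = c and n = N] by simp
  have Pk: "(\<Prod>l\<in>{..<N}-{k}. c (N - Suc l)) = P / c (N - Suc k)" if "k < N" for k
  proof -
    have "(\<Prod>k<N. c (N - Suc k)) = c (N - Suc k) * (\<Prod>l\<in>{..<N}-{k}. c (N - Suc l))"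
      using that by (simp add: prod.remove)
    moreover have "c (N - Suc k) \<noteq> 0" using c that by auto
    ultimately show ?thesis unfolding Pr by (simp add: field_simps)
  qed
  have cardk: "card ({..<N}-{k}) = N - 1" if "k < N" for k using that by simp
  have dG: "det (R1 N (\<lambda>k. [:0, c (N-1-k):]) (\<lambda>k. [:qu (N-1-k):]) (\<lambda>k. [:qv (N-1-k):])) =
       smult P (?X ^ N) - (\<Sum>j<N. smult (qu j * qv j * P / c j) (?X ^ (N-1)))"
  proof -
    have "(\<Prod>k<N. [:0, c (N-1-k):]) = (\<Prod>k<N. smult (c (N-1-k)) ?X)"
      by (rule prod.cong) simp_all
    also have "\<dots> = smult P (?X ^ N)"
      by (subst prod_smult_const) (auto simp: Pr)
    finally have p1: "(\<Prod>k<N. [:0, c (N-1-k):]) = smult P (?X ^ N)" .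
    moreover have "(\<Sum>k<N. [:qu (N-1-k):] * [:qv (N-1-k):] * (\<Prod>l\<in>{..<N}-{k}. [:0, c (N-1-l):]))
        = (\<Sum>k<N. smult (qu (N - Suc k) * qv (N - Suc k) * P / c (N - Suc k)) (?X ^ (N-1)))"
    proof (rule sum.cong[OF refl])
      fix k assume k: "k \<in> {..<N}"
      show "[:qu (N-1-k):] * [:qv (N-1-k):] * (\<Prod>l\<in>{..<N}-{k}. [:0, c (N-1-l):]) =
          smult (qu (N - Suc k) * qv (N - Suc k) * P / c (N - Suc k)) (?X ^ (N-1))"
      proof -
        have "(\<Prod>l\<in>{..<N}-{k}. [:0, c (N-1-l):]) = (\<Prod>l\<in>{..<N}-{k}. smult (c (N-1-l)) ?X)"
          by (rule prod.cong) simp_all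
        also have "\<dots> = smult (P / c (N-1-k)) (?X ^ (N-1))"
          using k by (subst prod_smult_const) (auto simp: Pk cardk)
        finally show ?thesis using k by (simp add: const_mult_left smult_smult mult_ac)
      qed
    qed
    moreover have "(\<Sum>k<N. smult (qu (N - Suc k) * qv (N - Suc k) * P / c (N - Suc k)) (?X ^ (N-1)))
        = (\<Sum>j<N. smult (qu j * qv j * P / c j) (?X ^ (N-1)))"
      by (rule sum.nat_diff_reindex[where g = "\<lambda>j. smult (qu j * qv j * P / c j) (?X ^ (N-1))"])
    ultimately show ?thesis unfolding det_R1 p1 by simp
  qed
  have sumS: "(\<Sum>j<N. schur N (hook M N j) u * schur N (hook M N j) v / c j) = (\<Sum>j<N. qu j * qv j / c j)"
    by (rule sum.cong) (auto simp: ss)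
  have XN: "?X ^ N = ?X ^ (N - 1) * ?X" using N by (metis power_minus_mult not_one_le_zero le_zero_eq zero_less_iff_neq_zero)
  have "det (mat N N (\<lambda>(i,k). pt M N c (u i * v k))) =
     [:vandermonde N u * vandermonde N v:] * (smult P (?X ^ N) - (\<Sum>j<N. smult (qu j * qv j * P / c j) (?X ^ (N-1))))"
    using main_factor[OF N, of c u v] dG[unfolded qu_def qv_def] by (simp add: qu_def qv_def)
  also have "(\<Sum>j<N. smult (qu j * qv j * P / c j) (?X ^ (N-1))) = smult (P * (\<Sum>j<N. qu j * qv j / c j)) (?X ^ (N-1))"
    by (simp add: smult_sum[symmetric] sum_distrib_left mult_ac)
  finally show ?thesis unfolding sumS XN P_def[symmetric]
    by (simp add: const_mult_left smult_diff_right algebra_simps smult_smult)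
qed

theorem theorem2p1:
  fixes c u v :: "nat \<Rightarrow> 'a::field" and M N :: nat
  assumes "1 \<le> N" and "N \<le> M" and "\<forall>j<N. c j \<noteq> 0"
  shows "det (mat N N (\<lambda>(i,k). pt M N c (u i * v k))) =
           [:0, 1:] ^ (N - 1) *
           [: vandermonde N u * vandermonde N v * (\<Prod>j<N. c j) :] *
           ([:0, 1:] - [: \<Sum>j<N. schur N (hook M N j) u * schur N (hook M N j) v / c j :]) \<and>
         (\<forall>j<N. schur N (hook M N j) (\<lambda>_. 1 :: int)
                = int ((M choose j) * ((M - j - 1) choose (N - j - 1))))"
  using part1[OF assms] part2[OF assms(1,2)] by blast


end
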